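(* Let $n$ and $m$ be integers with $n\geq 2$ and $1\leq m\leq\binom{n}{2}$, and let $n'=\min\{\lfloor\frac{m+3}{2}\rfloor,n\}$. A two-terminal graph $G\in T_{n,m}$ is a $2$-uniformly most reliable two-terminal graph ($2$-UMRTTG) if and only if $G$ contains $A_{n',0}$ as a subgraph (as a two-terminal graph, i.e. with terminals corresponding to terminals).
   Context: All graphs are finite, simple and undirected. A two-terminal graph is a graph $G$ together with two distinguished vertices $s,t$ (the terminals). Two two-terminal graphs are isomorphic if there is a graph isomorphism between them mapping the set of terminals onto the set of terminals. $T_{n,m}$ denotes the set of all pairwise nonisomorphic two-terminal graphs with $n$ vertices and $m$ edges. For a positive integer $d$, a $d$-pathset of a two-terminal graph $G$ is a spanning subgraph of $G$ containing a path of length (number of edges) at most $d$ joining $s$ and $t$. For $\rho\in[0,1]$, $R_G^d(\rho)$ is the probability that the random spanning subgraph obtained from $G$ by deleting each edge independently with probability $\rho$ is a $d$-pathset. A graph $G\in T_{n,m}$ is a $d$-UMRTTG if $R_G^d(\rho)\geq R_H^d(\rho)$ for every $H\in T_{n,m}$ and every $\rho\in[0,1]$. For an integer $k\geq 2$, $A_{k,0}$ is the two-terminal graph with vertex set $\{s,t,v_3,\ldots,v_k\}$, terminals $s,t$, and edge set $\{st\}\cup\{sv_i,v_it:3\leq i\leq k\}$ (so $A_{2,0}$ is the single edge $st$). *)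

theory Defs
  imports Main "HOL-Analysis.Analysis"
begin

definition two_terminal_graph :: "'a set \<Rightarrow> 'a set set \<Rightarrow> 'a \<Rightarrow> 'a \<Rightarrow> bool" where
  "two_terminal_graph V E s t \<longleftrightarrow>
     finite V \<and> E \<subseteq> {{u, v} | u v. u \<in> V \<and> v \<in> V \<and> u \<noteq> v} \<and>
     s \<in> V \<and> t \<in> V \<and> s \<noteq> t"

definition is_path :: "'a set set \<Rightarrow> 'a list \<Rightarrow> bool" where
  "is_path F xs \<longleftrightarrow> xs \<noteq> [] \<and> distinct xs \<and>
     (\<forall>i. Suc i < length xs \<longrightarrow> {xs ! i, xs ! Suc i} \<in> F)"

definition d_pathset :: "nat \<Rightarrow> 'a set set \<Rightarrow> 'a \<Rightarrow> 'a \<Rightarrow> bool" where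
  "d_pathset d F s t \<longleftrightarrow>
     (\<exists>xs. is_path F xs \<and> hd xs = s \<and> last xs = t \<and> length xs - 1 \<le> d)"

text \<open>Probability that deleting each edge independently with probability rho
  leaves a d-pathset.\<close>
definition rel :: "nat \<Rightarrow> 'a set set \<Rightarrow> 'a \<Rightarrow> 'a \<Rightarrow> real \<Rightarrow> real" where
  "rel d E s t \<rho> =
     (\<Sum>F \<in> {F. F \<subseteq> E \<and> d_pathset d F s t}.
        (1 - \<rho>) ^ card F * \<rho> ^ card (E - F))"

definition UMRTTG :: "nat \<Rightarrow> 'a set \<Rightarrow> 'a set set \<Rightarrow> 'a \<Rightarrow> 'a \<Rightarrow> bool" where
  "UMRTTG d V E s t \<longleftrightarrow>
     (\<forall>(V'::'a set) E' s' t'. two_terminal_graph V' E' s' t' \<and> card V' = card V \<and> card E' = card E \<longrightarrow>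
        (\<forall>\<rho>::real. 0 \<le> \<rho> \<and> \<rho> \<le> 1 \<longrightarrow> rel d E s t \<rho> \<ge> rel d E' s' t' \<rho>))"

text \<open>A_{k,0} on vertex set {0..<k}, terminals s = 0, t = 1, inner vertices 2..k-1
  (corresponding to v_3..v_k).\<close>
definition A_verts :: "nat \<Rightarrow> nat set" where
  "A_verts k = {0..<k}"

definition A_edges :: "nat \<Rightarrow> nat set set" where
  "A_edges k = insert {0, 1} ({{0, i} | i. 2 \<le> i \<and> i < k} \<union> {{i, 1} | i. 2 \<le> i \<and> i < k})"

definition contains_tt ::
  "'a set \<Rightarrow> 'a set set \<Rightarrow> 'a \<Rightarrow> 'a \<Rightarrow> 'b set \<Rightarrow> 'b set set \<Rightarrow> 'b \<Rightarrow> 'b \<Rightarrow> bool" where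
  "contains_tt V E s t VH EH sH tH \<longleftrightarrow>
     (\<exists>f. inj_on f VH \<and> f ` VH \<subseteq> V \<and> (\<forall>e \<in> EH. f ` e \<in> E) \<and> {f sH, f tH} = {s, t})"

end

theory Submission
  imports Defs
begin


definition W :: "real \<Rightarrow> 'e set \<Rightarrow> 'e set \<Rightarrow> real" where
  "W \<rho> A F = (1 - \<rho>) ^ card F * \<rho> ^ card (A - F)"

lemma W_split:
  assumes "finite A" "finite B" "A \<inter> B = {}" "X \<subseteq> A" "Y \<subseteq> B"
  shows "W \<rho> (A \<union> B) (X \<union> Y) = W \<rho> A X * W \<rho> B Y"
proof -
  have c1: "card (X \<union> Y) = card X + card Y"
    using assms by (meson card_Un_disjoint disjoint_iff finite_subset subsetD)
  have e: "(A \<union> B) - (X \<union> Y) = (A - X) \<union> (B - Y)" using assms by blast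
  have c2: "card ((A - X) \<union> (B - Y)) = card (A - X) + card (B - Y)"
    using assms by (intro card_Un_disjoint) auto
  show ?thesis unfolding W_def by (simp only: c1 e c2 power_add mult_ac)
qed

lemma sum_split:
  assumes fin: "finite A" "finite B" and disj: "A \<inter> B = {}"
  shows "(\<Sum>F\<in>Pow (A \<union> B). W \<rho> (A \<union> B) F * \<phi> (F \<inter> A) * \<psi> (F \<inter> B))
       = (\<Sum>F\<in>Pow A. W \<rho> A F * \<phi> F) * (\<Sum>F\<in>Pow B. W \<rho> B F * \<psi> F)"
proof -
  have img: "Pow (A \<union> B) = (\<lambda>(X,Y). X \<union> Y) ` (Pow A \<times> Pow B)"
  proof
    show "Pow (A \<union> B) \<subseteq> (\<lambda>(X,Y). X \<union> Y) ` (Pow A \<times> Pow B)"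
    proof
      fix F assume "F \<in> Pow (A \<union> B)"
      then have "F = (\<lambda>(X,Y). X \<union> Y) (F \<inter> A, F \<inter> B)" "(F \<inter> A, F \<inter> B) \<in> Pow A \<times> Pow B" by auto
      then show "F \<in> (\<lambda>(X,Y). X \<union> Y) ` (Pow A \<times> Pow B)" by blast
    qed
  qed auto
  have inj: "inj_on (\<lambda>(X,Y). X \<union> Y) (Pow A \<times> Pow B)"
  proof (rule inj_onI, clarify)
    fix X Y X' Y' assume h: "X \<subseteq> A" "Y \<subseteq> B" "X' \<subseteq> A" "Y' \<subseteq> B" "X \<union> Y = X' \<union> Y'"
    then have "X = (X \<union> Y) \<inter> A" "X' = (X' \<union> Y') \<inter> A" "Y = (X \<union> Y) \<inter> B" "Y' = (X' \<union> Y') \<inter> B"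
      using disj by blast+
    then show "X = X' \<and> Y = Y'" using h(5) by metis
  qed
  have "(\<Sum>F\<in>Pow (A \<union> B). W \<rho> (A \<union> B) F * \<phi> (F \<inter> A) * \<psi> (F \<inter> B))
      = (\<Sum>(X,Y)\<in>Pow A \<times> Pow B. W \<rho> (A \<union> B) (X \<union> Y) * \<phi> ((X \<union> Y) \<inter> A) * \<psi> ((X \<union> Y) \<inter> B))"
    unfolding img by (subst sum.reindex[OF inj]) (simp add: case_prod_unfold)
  also have "\<dots> = (\<Sum>(X,Y)\<in>Pow A \<times> Pow B. (W \<rho> A X * \<phi> X) * (W \<rho> B Y * \<psi> Y))"
  proof (rule sum.cong[OF refl])
    fix p assume "p \<in> Pow A \<times> Pow B"
    then obtain X Y where p: "p = (X,Y)" and h: "X \<subseteq> A" "Y \<subseteq> B" by auto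
    have e: "(X \<union> Y) \<inter> A = X" "(X \<union> Y) \<inter> B = Y" using disj h by blast+
    have w: "W \<rho> (A \<union> B) (X \<union> Y) = W \<rho> A X * W \<rho> B Y" using W_split[OF fin disj h] .
    show "(case p of (X,Y) \<Rightarrow> W \<rho> (A \<union> B) (X \<union> Y) * \<phi> ((X \<union> Y) \<inter> A) * \<psi> ((X \<union> Y) \<inter> B)) = (case p of (X,Y) \<Rightarrow> (W \<rho> A X * \<phi> X) * (W \<rho> B Y * \<psi> Y))"
      unfolding p by (simp add: e w mult_ac)
  qed
  also have "\<dots> = (\<Sum>F\<in>Pow A. W \<rho> A F * \<phi> F) * (\<Sum>F\<in>Pow B. W \<rho> B F * \<psi> F)"
    unfolding sum_product sum.cartesian_product by (simp add: case_prod_unfold)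
  finally show ?thesis .
qed

lemma sum_single:
  "(\<Sum>F\<in>Pow {x}. W \<rho> {x} F * \<phi> F) = \<rho> * \<phi> {} + (1 - \<rho>) * \<phi> {x}"
  by (simp add: Pow_insert W_def)

lemma sum_total:
  assumes "finite A"
  shows "(\<Sum>F\<in>Pow A. W \<rho> A F) = 1"
  using assms
proof (induction A rule: finite_induct)
  case empty then show ?case by (simp add: W_def)
next
  case (insert x A)
  have "insert x A = {x} \<union> A" by auto
  then have "(\<Sum>F\<in>Pow (insert x A). W \<rho> (insert x A) F)
     = (\<Sum>F\<in>Pow ({x} \<union> A). W \<rho> ({x} \<union> A) F * (\<lambda>_. 1) (F \<inter> {x}) * (\<lambda>_. 1) (F \<inter> A))" by simp
  also have "\<dots> = (\<Sum>F\<in>Pow {x}. W \<rho> {x} F * 1) * (\<Sum>F\<in>Pow A. W \<rho> A F * 1)"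
    by (rule sum_split) (use insert in auto)
  finally show ?case using insert sum_single[of \<rho> x "\<lambda>_. 1"] by simp
qed

lemma sum_block:
  assumes "finite B"
  shows "(\<Sum>F\<in>Pow B. W \<rho> B F * (if B \<subseteq> F then 0 else 1)) = 1 - (1 - \<rho>) ^ card B"
proof -
  have "(\<Sum>F\<in>Pow B. W \<rho> B F * (if B \<subseteq> F then 0 else 1))
      = (\<Sum>F\<in>Pow B. W \<rho> B F) - (\<Sum>F\<in>Pow B. if B = F then W \<rho> B F else 0)"
    by (subst sum_subtractf[symmetric], rule sum.cong) auto
  also have "\<dots> = 1 - W \<rho> B B" using sum_total[OF assms] by (simp add: sum.delta assms)
  finally show ?thesis by (simp add: W_def)
qed

lemma sum_blocks:
  fixes p :: "'v \<Rightarrow> 'e set"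
  assumes "finite C" "\<forall>v\<in>C. finite (p v) \<and> p v \<inter> X = {}"
    "\<forall>v\<in>C. \<forall>w\<in>C. v \<noteq> w \<longrightarrow> p v \<inter> p w = {}" "finite X"
  shows "(\<Sum>F\<in>Pow (X \<union> \<Union>(p ` C)). W \<rho> (X \<union> \<Union>(p ` C)) F *
            (if \<phi> (F \<inter> X) \<and> (\<forall>v\<in>C. \<not> p v \<subseteq> F) then 1 else 0))
       = (\<Sum>F\<in>Pow X. W \<rho> X F * (if \<phi> F then 1 else 0)) * (\<Prod>v\<in>C. 1 - (1 - \<rho>) ^ card (p v))"
  using assms
proof (induction C rule: finite_induct)
  case empty
  have "(\<Sum>F\<in>Pow X. W \<rho> X F * (if \<phi> (F \<inter> X) then 1 else 0)) = (\<Sum>F\<in>Pow X. W \<rho> X F * (if \<phi> F then 1 else 0))"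
    by (rule sum.cong) (simp_all add: Int_absorb2)
  then show ?case by simp
next
  case (insert c C)
  define A where "A = X \<union> \<Union>(p ` C)"
  define B where "B = p c"
  have AB: "X \<union> \<Union>(p ` insert c C) = A \<union> B" unfolding A_def B_def by auto
  have pfin: "finite (p c)" and pcX: "p c \<inter> X = {}" using insert.prems(1) by auto
  have pv: "\<forall>v\<in>C. p v \<inter> p c = {}" using insert.prems(2) insert.hyps(2) by (metis insertCI)
  have prC1: "\<forall>v\<in>C. finite (p v) \<and> p v \<inter> X = {}" using insert.prems(1) by simp
  have prC2: "\<forall>v\<in>C. \<forall>w\<in>C. v \<noteq> w \<longrightarrow> p v \<inter> p w = {}" using insert.prems(2) by simp
  have finA: "finite A" unfolding A_def using insert.hyps(1) prC1 insert.prems(3) by auto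
  have finB: "finite B" unfolding B_def using pfin .
  have disj: "A \<inter> B = {}" unfolding A_def B_def using pcX pv by blast
  let ?i1 = "\<lambda>G. if \<phi> (G \<inter> X) \<and> (\<forall>v\<in>C. \<not> p v \<subseteq> G) then 1 else (0::real)"
  let ?i2 = "\<lambda>G. if B \<subseteq> G then 0 else (1::real)"
  have "(\<Sum>F\<in>Pow (X \<union> \<Union>(p ` insert c C)). W \<rho> (X \<union> \<Union>(p ` insert c C)) F *
            (if \<phi> (F \<inter> X) \<and> (\<forall>v\<in>insert c C. \<not> p v \<subseteq> F) then 1 else 0))
      = (\<Sum>F\<in>Pow (A \<union> B). W \<rho> (A \<union> B) F * ?i1 (F \<inter> A) * ?i2 (F \<inter> B))"
    unfolding AB
  proof (rule sum.cong[OF refl])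
    fix F assume F: "F \<in> Pow (A \<union> B)"
    have x: "F \<inter> A \<inter> X = F \<inter> X" unfolding A_def by blast
    have y: "(\<forall>v\<in>C. \<not> p v \<subseteq> F \<inter> A) = (\<forall>v\<in>C. \<not> p v \<subseteq> F)" unfolding A_def by blast
    have z: "(B \<subseteq> F \<inter> B) = (p c \<subseteq> F)" unfolding B_def by blast
    show "W \<rho> (A \<union> B) F * (if \<phi> (F \<inter> X) \<and> (\<forall>v\<in>insert c C. \<not> p v \<subseteq> F) then 1 else 0)
       = W \<rho> (A \<union> B) F * ?i1 (F \<inter> A) * ?i2 (F \<inter> B)"
      by (simp only: x y z) auto
  qed
  also have "\<dots> = (\<Sum>F\<in>Pow A. W \<rho> A F * ?i1 F) * (\<Sum>F\<in>Pow B. W \<rho> B F * ?i2 F)"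
    by (rule sum_split[OF finA finB disj])
  also have "(\<Sum>F\<in>Pow A. W \<rho> A F * ?i1 F) = (\<Sum>F\<in>Pow X. W \<rho> X F * (if \<phi> F then 1 else 0)) * (\<Prod>v\<in>C. 1 - (1 - \<rho>) ^ card (p v))"
    unfolding A_def using insert.IH[OF prC1 prC2 insert.prems(3)] by simp
  also have "(\<Sum>F\<in>Pow B. W \<rho> B F * ?i2 F) = 1 - (1 - \<rho>) ^ card (p c)"
    using sum_block[OF finB] unfolding B_def by simp
  finally show ?case using insert.hyps by (simp add: mult_ac)
qed



lemma edge_ne:
  assumes "two_terminal_graph V E s t" "{a, b} \<in> E"
  shows "a \<noteq> b" "a \<in> V" "b \<in> V"
proof -
  obtain u v where "{a,b} = {u,v}" "u \<in> V" "v \<in> V" "u \<noteq> v"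
    using assms unfolding two_terminal_graph_def by blast
  then show "a \<noteq> b" "a \<in> V" "b \<in> V" by (auto simp: doubleton_eq_iff)
qed

lemma tt_facts:
  assumes "two_terminal_graph V E s t"
  shows "finite V" "s \<noteq> t" "s \<in> V" "t \<in> V" "finite E"
proof -
  show "finite V" "s \<noteq> t" "s \<in> V" "t \<in> V" using assms unfolding two_terminal_graph_def by auto
  have "E \<subseteq> Pow V" using assms unfolding two_terminal_graph_def by auto
  then show "finite E" using \<open>finite V\<close> by (meson finite_Pow_iff finite_subset)
qed

definition CN :: "'a set set \<Rightarrow> 'a \<Rightarrow> 'a \<Rightarrow> 'a set" where
  "CN E s t = {v. {s, v} \<in> E \<and> {v, t} \<in> E}"

lemma CN_facts:
  assumes "two_terminal_graph V E s t"
  shows "CN E s t \<subseteq> V - {s, t}" "finite (CN E s t)"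
proof -
  show "CN E s t \<subseteq> V - {s, t}"
    unfolding CN_def using edge_ne[OF assms] by blast
  then show "finite (CN E s t)" using tt_facts[OF assms] finite_subset by blast
qed

lemma pathset_char:
  assumes G: "two_terminal_graph V E s t" and F: "F \<subseteq> E"
  shows "d_pathset 2 F s t \<longleftrightarrow> {s,t} \<in> F \<or> (\<exists>v\<in>CN E s t. {{s,v},{v,t}} \<subseteq> F)"
proof
  assume "d_pathset 2 F s t"
  then obtain xs where p: "is_path F xs" "hd xs = s" "last xs = t" "length xs - 1 \<le> 2"
    unfolding d_pathset_def by blast
  have st: "s \<noteq> t" using tt_facts[OF G] by simp
  have ne: "xs \<noteq> []" and adj: "\<And>i. Suc i < length xs \<Longrightarrow> {xs ! i, xs ! Suc i} \<in> F"
    using p(1) unfolding is_path_def by auto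
  consider (a) "length xs = 1" | (b) "length xs = 2" | (c) "length xs = 3"
  proof -
    have "length xs \<noteq> 0" using ne by simp
    then have "length xs = 1 \<or> length xs = 2 \<or> length xs = 3" using p(4) by presburger
    then show ?thesis using that by blast
  qed
  then show "{s,t} \<in> F \<or> (\<exists>v\<in>CN E s t. {{s,v},{v,t}} \<subseteq> F)"
  proof cases
    case a
    then obtain x where "xs = [x]" by (metis One_nat_def length_0_conv length_Suc_conv)
    then show ?thesis using p st by simp
  next
    case b
    then obtain x y where xs: "xs = [x, y]"
      by (metis One_nat_def Suc_1 length_0_conv length_Suc_conv)
    then show ?thesis using p adj[of 0] by simp
  next
    case c
    then obtain x y z where xs: "xs = [x, y, z]"
      by (metis One_nat_def length_0_conv length_Suc_conv numeral_3_eq_3)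
    then have "x = s" "z = t" "{x,y} \<in> F" "{y,z} \<in> F" using p adj[of 0] adj[of 1] by auto
    then show ?thesis using F unfolding CN_def by blast
  qed
next
  assume h: "{s,t} \<in> F \<or> (\<exists>v\<in>CN E s t. {{s,v},{v,t}} \<subseteq> F)"
  have st: "s \<noteq> t" using tt_facts[OF G] by simp
  show "d_pathset 2 F s t"
  proof (cases "{s,t} \<in> F")
    case True
    have "is_path F [s,t]" unfolding is_path_def using True st
      by (auto simp: less_Suc_eq)
    then show ?thesis unfolding d_pathset_def by (intro exI[of _ "[s,t]"]) auto
  next
    case False
    then obtain v where v: "v \<in> CN E s t" "{s,v} \<in> F" "{v,t} \<in> F" using h by auto
    have "v \<noteq> s" "v \<noteq> t" using CN_facts(1)[OF G] v(1) by auto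
    then have "is_path F [s,v,t]" unfolding is_path_def using v st
      by (auto simp: less_Suc_eq)
    then show ?thesis unfolding d_pathset_def by (intro exI[of _ "[s,v,t]"]) auto
  qed
qed



lemma sum_avoid:
  assumes "finite X"
  shows "(\<Sum>F\<in>Pow X. W \<rho> X F * (if e \<notin> F then 1 else 0)) = (if e \<in> X then \<rho> else 1)"
proof (cases "e \<in> X")
  case True
  have XX: "X = {e} \<union> (X - {e})" using True by blast
  have "(\<Sum>F\<in>Pow X. W \<rho> X F * (if e \<notin> F then 1 else 0))
     = (\<Sum>F\<in>Pow ({e} \<union> (X - {e})). W \<rho> ({e} \<union> (X - {e})) F *
          (\<lambda>G. if e \<notin> G then 1 else (0::real)) (F \<inter> {e}) * (\<lambda>_. 1) (F \<inter> (X - {e})))"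
  proof -
    have XX': "{e} \<union> (X - {e}) = X" using True by blast
    show ?thesis by (simp only: XX') (rule sum.cong, auto)
  qed
  also have "\<dots> = (\<Sum>F\<in>Pow {e}. W \<rho> {e} F * (if e \<notin> F then 1 else 0)) * (\<Sum>F\<in>Pow (X - {e}). W \<rho> (X - {e}) F * 1)"
    by (rule sum_split) (use assms in auto)
  also have "\<dots> = \<rho>" using sum_single[of \<rho> e "\<lambda>G. if e \<notin> G then 1 else 0"] sum_total[of "X - {e}" \<rho>] assms
    by simp
  finally show ?thesis using True by simp
next
  case False
  have "(\<Sum>F\<in>Pow X. W \<rho> X F * (if e \<notin> F then 1 else 0)) = (\<Sum>F\<in>Pow X. W \<rho> X F)"
    by (rule sum.cong) (use False in auto)
  then show ?thesis using sum_total[OF assms] False by simp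
qed

lemma rel_formula:
  assumes G: "two_terminal_graph V E s t"
  shows "rel 2 E s t \<rho> = 1 - (if {s,t} \<in> E then \<rho> else 1) * (1 - (1 - \<rho>)^2) ^ card (CN E s t)"
proof -
  define C where "C = CN E s t"
  define p where "p = (\<lambda>v::'a. {{s,v},{v,t}})"
  define X where "X = E - \<Union>(p ` C)"
  have finE: "finite E" and st: "s \<noteq> t" using tt_facts[OF G] by auto
  have finC: "finite C" unfolding C_def using CN_facts[OF G] by simp
  have Cv: "\<forall>v\<in>C. v \<noteq> s \<and> v \<noteq> t \<and> p v \<subseteq> E"
    using CN_facts(1)[OF G] unfolding C_def p_def CN_def by auto
  have Eeq: "E = X \<union> \<Union>(p ` C)" unfolding X_def using Cv by blast
  have finX: "finite X" unfolding X_def using finE by simp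
  have c1: "\<forall>v\<in>C. finite (p v) \<and> p v \<inter> X = {}" unfolding X_def p_def by auto
  have c2: "\<forall>v\<in>C. \<forall>w\<in>C. v \<noteq> w \<longrightarrow> p v \<inter> p w = {}"
    using Cv st unfolding p_def by (auto simp: doubleton_eq_iff)
  have cardp: "\<forall>v\<in>C. card (p v) = 2"
    using Cv st unfolding p_def by (auto simp: doubleton_eq_iff card_insert_if)
  have stp: "\<forall>v\<in>C. {s,t} \<notin> p v"
    using Cv st unfolding p_def by (auto simp: doubleton_eq_iff)
  have stX: "{s,t} \<in> X \<longleftrightarrow> {s,t} \<in> E" unfolding X_def using stp by auto
  let ?ind = "\<lambda>F. if (\<lambda>G. {s,t} \<notin> G) (F \<inter> X) \<and> (\<forall>v\<in>C. \<not> p v \<subseteq> F) then 1 else (0::real)"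
  have "rel 2 E s t \<rho> = (\<Sum>F\<in>{F\<in>Pow E. d_pathset 2 F s t}. W \<rho> E F)"
    unfolding rel_def W_def by (rule sum.cong) auto
  also have "\<dots> = (\<Sum>F\<in>Pow E. if d_pathset 2 F s t then W \<rho> E F else 0)"
    by (subst sum.inter_filter[symmetric]) (simp_all add: finE)
  also have "\<dots> = (\<Sum>F\<in>Pow E. W \<rho> E F - W \<rho> E F * ?ind F)"
  proof (rule sum.cong[OF refl])
    fix F assume F: "F \<in> Pow E"
    have "d_pathset 2 F s t \<longleftrightarrow> {s,t} \<in> F \<or> (\<exists>v\<in>C. p v \<subseteq> F)"
      using pathset_char[OF G, of F] F unfolding C_def p_def by auto
    moreover have "{s,t} \<in> F \<longleftrightarrow> {s,t} \<in> F \<inter> X" using F stX by auto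
    ultimately have "d_pathset 2 F s t \<longleftrightarrow> \<not> ({s,t} \<notin> F \<inter> X \<and> (\<forall>v\<in>C. \<not> p v \<subseteq> F))"
      by blast
    then show "(if d_pathset 2 F s t then W \<rho> E F else 0) = W \<rho> E F - W \<rho> E F * ?ind F"
      by (simp only: if_not_P if_P) simp
  qed
  also have "\<dots> = 1 - (\<Sum>F\<in>Pow E. W \<rho> E F * ?ind F)"
    by (simp add: sum_subtractf sum_total[OF finE])
  also have "(\<Sum>F\<in>Pow E. W \<rho> E F * ?ind F)
      = (\<Sum>F\<in>Pow X. W \<rho> X F * (if {s,t} \<notin> F then 1 else 0)) * (\<Prod>v\<in>C. 1 - (1 - \<rho>) ^ card (p v))"
    using sum_blocks[OF finC c1 c2 finX, of \<rho> "\<lambda>G. {s,t} \<notin> G"] Eeq[symmetric] by (simp only:)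
  also have "\<dots> = (if {s,t} \<in> E then \<rho> else 1) * (1 - (1 - \<rho>)^2) ^ card C"
    using sum_avoid[OF finX, of \<rho> "{s,t}"] stX cardp by simp
  finally show ?thesis unfolding C_def .
qed



lemma bounds:
  assumes G: "two_terminal_graph V E s t"
  shows "card (CN E s t) \<le> card V - 2"
    "(if {s,t} \<in> E then 1 else 0) + 2 * card (CN E s t) \<le> card E"
proof -
  have fV: "finite V" and st: "s \<noteq> t" "s \<in> V" "t \<in> V" and fE: "finite E" using tt_facts[OF G] by auto
  have sub: "CN E s t \<subseteq> V - {s,t}" using CN_facts[OF G] by simp
  have "card (V - {s,t}) = card V - 2" using st fV by (simp add: card_Diff_subset)
  then show "card (CN E s t) \<le> card V - 2" using card_mono[OF _ sub] fV by simp
  define C where "C = CN E s t"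
  have finC: "finite C" unfolding C_def using CN_facts[OF G] by simp
  have Cv: "\<forall>v\<in>C. v \<noteq> s \<and> v \<noteq> t \<and> {s,v} \<in> E \<and> {v,t} \<in> E"
    using sub unfolding C_def CN_def by auto
  define S1 where "S1 = (\<lambda>v. {s,v}) ` C"
  define S2 where "S2 = (\<lambda>v. {v,t}) ` C"
  have c1: "card S1 = card C" unfolding S1_def
    by (rule card_image) (auto simp: inj_on_def doubleton_eq_iff)
  have c2: "card S2 = card C" unfolding S2_def
    by (rule card_image) (auto simp: inj_on_def doubleton_eq_iff)
  have d: "S1 \<inter> S2 = {}" unfolding S1_def S2_def using Cv st by (auto simp: doubleton_eq_iff)
  have c12: "card (S1 \<union> S2) = 2 * card C"
    using card_Un_disjoint[of S1 S2] d c1 c2 finC unfolding S1_def S2_def by simp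
  have sE: "S1 \<union> S2 \<subseteq> E" unfolding S1_def S2_def using Cv by auto
  have nst: "{s,t} \<notin> S1 \<union> S2" unfolding S1_def S2_def using Cv st by (auto simp: doubleton_eq_iff)
  have fS: "finite (S1 \<union> S2)" unfolding S1_def S2_def using finC by simp
  show "(if {s,t} \<in> E then 1 else 0) + 2 * card (CN E s t) \<le> card E"
  proof (cases "{s,t} \<in> E")
    case True
    have "card (insert {s,t} (S1 \<union> S2)) \<le> card E" using True sE fE by (intro card_mono) auto
    then show ?thesis using True nst fS c12 unfolding C_def by simp
  next
    case False
    have "card (S1 \<union> S2) \<le> card E" using sE fE by (intro card_mono) auto
    then show ?thesis using False c12 unfolding C_def by simp
  qed
qed

lemma contains_iff:
  assumes G: "two_terminal_graph V E s t"
  shows "contains_tt V E s t (A_verts (K+2)) (A_edges (K+2)) 0 1 \<longleftrightarrow> {s,t} \<in> E \<and> K \<le> card (CN E s t)"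
proof
  assume "contains_tt V E s t (A_verts (K+2)) (A_edges (K+2)) 0 1"
  then obtain f where f: "inj_on f {0..<K+2}" "f ` {0..<K+2} \<subseteq> V"
    "\<forall>e\<in>A_edges (K+2). f ` e \<in> E" "{f 0, f 1} = {s,t}"
    unfolding contains_tt_def A_verts_def by blast
  have "{0,1} \<in> A_edges (K+2)" unfolding A_edges_def by simp
  then have "{s,t} \<in> E" using f(3,4) by force
  moreover have "f ` {2..<K+2} \<subseteq> CN E s t"
  proof
    fix x assume "x \<in> f ` {2..<K+2}"
    then obtain i where i: "2 \<le> i" "i < K+2" "x = f i" by auto
    have "{0,i} \<in> A_edges (K+2)" "{i,1} \<in> A_edges (K+2)" unfolding A_edges_def using i by blast+
    then have "{f 0, x} \<in> E" "{x, f 1} \<in> E" using f(3) i(3) by force+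
    then show "x \<in> CN E s t" using f(4) unfolding CN_def
      by (auto simp: doubleton_eq_iff insert_commute)
  qed
  moreover have "card (f ` {2..<K+2}) = K"
    using f(1) by (subst card_image) (auto intro: inj_on_subset)
  ultimately show "{s,t} \<in> E \<and> K \<le> card (CN E s t)"
    using CN_facts(2)[OF G] card_mono by metis
next
  assume h: "{s,t} \<in> E \<and> K \<le> card (CN E s t)"
  obtain Wc where W: "Wc \<subseteq> CN E s t" "card Wc = K" "finite Wc"
    using h obtain_subset_with_card_n by metis
  obtain g where g: "bij_betw g {2..<K+2} Wc"
    using finite_same_card_bij[of "{2..<K+2}" Wc] W by auto
  have sub: "CN E s t \<subseteq> V - {s,t}" using CN_facts[OF G] by simp
  have gW: "\<And>i. i \<in> {2..<K+2} \<Longrightarrow> g i \<in> Wc" using g by (auto simp: bij_betw_def)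
  have gC: "\<And>i. i \<in> {2..<K+2} \<Longrightarrow> g i \<in> CN E s t" using gW W by auto
  have gst: "\<And>i. i \<in> {2..<K+2} \<Longrightarrow> g i \<noteq> s \<and> g i \<noteq> t \<and> g i \<in> V" using gC sub by blast
  have ginj: "inj_on g {2..<K+2}" using g by (auto simp: bij_betw_def)
  have st: "s \<noteq> t" "s \<in> V" "t \<in> V" using tt_facts[OF G] by auto
  define f where "f = (\<lambda>i. if i = 0 then s else if i = 1 then t else g i)"
  have fi: "\<And>i. i \<in> {2..<K+2} \<Longrightarrow> f i = g i" unfolding f_def by auto
  show "contains_tt V E s t (A_verts (K+2)) (A_edges (K+2)) 0 1"
    unfolding contains_tt_def A_verts_def
  proof (intro exI[of _ f] conjI)
    show "inj_on f {0..<K+2}"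
    proof (rule inj_onI)
      fix i j assume ij: "i \<in> {0..<K+2}" "j \<in> {0..<K+2}" "f i = f j"
      consider "i = 0" | "i = 1" | "i \<in> {2..<K+2}" using ij by force
      moreover consider "j = 0" | "j = 1" | "j \<in> {2..<K+2}" using ij by force
      ultimately show "i = j" using ij(3) st gst fi ginj unfolding inj_on_def
        by (metis f_def)
    qed
    show "f ` {0..<K+2} \<subseteq> V"
    proof
      fix x assume "x \<in> f ` {0..<K+2}"
      then obtain i where i: "i < K+2" "x = f i" by auto
      then consider "i = 0" | "i = 1" | "i \<in> {2..<K+2}" by force
      then show "x \<in> V" using i st gst fi unfolding f_def by (cases; auto)
    qed
    show "{f 0, f 1} = {s, t}" unfolding f_def by simp
    show "\<forall>e\<in>A_edges (K+2). f ` e \<in> E"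
    proof
      fix e assume "e \<in> A_edges (K+2)"
      then consider "e = {0,1}" | i where "e = {0,i}" "i \<in> {2..<K+2}" | i where "e = {i,1}" "i \<in> {2..<K+2}"
        unfolding A_edges_def by auto
      then show "f ` e \<in> E"
      proof cases
        case 1 then show ?thesis using h unfolding f_def by (simp add: insert_commute)
      next
        case (2 i)
        then have "f ` e = {s, g i}" using fi unfolding f_def by auto
        then show ?thesis using gC[OF 2(2)] unfolding CN_def by simp
      next
        case (3 i)
        then have "f ` e = {g i, t}" using fi unfolding f_def by auto
        then show ?thesis using gC[OF 3(2)] unfolding CN_def by simp
      qed
    qed
  qed
qed



lemma exists_H:
  assumes G: "two_terminal_graph V E s t" and n: "card V = n"
    and K: "K \<le> n - 2" "2 * K + 1 \<le> m" and m: "m \<le> n choose 2"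
  shows "\<exists>E'. two_terminal_graph V E' s t \<and> card E' = m \<and> {s,t} \<in> E' \<and> K \<le> card (CN E' s t)"
proof -
  have fV: "finite V" and st: "s \<noteq> t" "s \<in> V" "t \<in> V" using tt_facts[OF G] by auto
  define All where "All = {B. B \<subseteq> V \<and> card B = 2}"
  have cAll: "card All = n choose 2" unfolding All_def using n_subsets[OF fV, of 2] n by simp
  have fAll: "finite All" unfolding All_def using fV by simp
  have inAll: "\<And>x y. x \<in> V \<Longrightarrow> y \<in> V \<Longrightarrow> x \<noteq> y \<Longrightarrow> {x,y} \<in> All" unfolding All_def by auto
  have cVst: "card (V - {s,t}) = n - 2" using st fV n by (simp add: card_Diff_subset)
  obtain Wc where W: "Wc \<subseteq> V - {s,t}" "card Wc = K" "finite Wc"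
    using K(1) cVst obtain_subset_with_card_n by metis
  define E0 where "E0 = insert {s,t} ((\<lambda>v. {s,v}) ` Wc \<union> (\<lambda>v. {v,t}) ` Wc)"
  have E0All: "E0 \<subseteq> All" unfolding E0_def using W st inAll by auto
  have "card E0 \<le> Suc (card ((\<lambda>v. {s,v}) ` Wc \<union> (\<lambda>v. {v,t}) ` Wc))"
    unfolding E0_def using W(3) by (simp add: card_insert_if)
  also have "card ((\<lambda>v. {s,v}) ` Wc \<union> (\<lambda>v. {v,t}) ` Wc) \<le> card ((\<lambda>v. {s,v}) ` Wc) + card ((\<lambda>v. {v,t}) ` Wc)"
    by (rule card_Un_le)
  also have "\<dots> \<le> K + K" using card_image_le[OF W(3)] W(2) by (metis add_mono)
  finally have cE0: "card E0 \<le> m" using K by linarith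
  have fE0: "finite E0" using E0All fAll finite_subset by blast
  have "card (All - E0) = card All - card E0" using E0All fE0 by (simp add: card_Diff_subset)
  then have "m - card E0 \<le> card (All - E0)" using cAll m by linarith
  then obtain E1 where E1: "E1 \<subseteq> All - E0" "card E1 = m - card E0" "finite E1"
    using obtain_subset_with_card_n by metis
  define E' where "E' = E0 \<union> E1"
  have cE': "card E' = m" unfolding E'_def using E1 fE0 cE0 by (subst card_Un_disjoint) auto
  have E'All: "E' \<subseteq> All" unfolding E'_def using E1 E0All by auto
  have tt: "two_terminal_graph V E' s t" unfolding two_terminal_graph_def
  proof (intro conjI)
    show "E' \<subseteq> {{u, v} |u v. u \<in> V \<and> v \<in> V \<and> u \<noteq> v}"
    proof
      fix e assume "e \<in> E'"
      then have "e \<subseteq> V" "card e = 2" using E'All unfolding All_def by auto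
      then show "e \<in> {{u, v} |u v. u \<in> V \<and> v \<in> V \<and> u \<noteq> v}" by (auto simp: card_2_iff)
    qed
  qed (use fV st in auto)
  have "Wc \<subseteq> CN E' s t" unfolding CN_def E'_def E0_def by auto
  then have "K \<le> card (CN E' s t)" using W(2) CN_facts(2)[OF tt] card_mono by metis
  moreover have "{s,t} \<in> E'" unfolding E'_def E0_def by simp
  ultimately show ?thesis using tt cE' by blast
qed



theorem proposition1:
  fixes V :: "'a set" and E :: "'a set set" and s t :: 'a and n m :: nat
  assumes "two_terminal_graph V E s t"
    and "card V = n" and "card E = m"
    and "n \<ge> 2" and "1 \<le> m" and "m \<le> n choose 2"
  shows "UMRTTG 2 V E s t \<longleftrightarrow>
    contains_tt V E s t (A_verts (min ((m + 3) div 2) n)) (A_edges (min ((m + 3) div 2) n)) 0 1"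
proof -
  note G = assms(1)
  define K where "K = min ((m - 1) div 2) (n - 2)"
  have nK: "min ((m + 3) div 2) n = K + 2" unfolding K_def using assms(4,5) by linarith
  define kG where "kG = card (CN E s t)"
  have bG1: "kG \<le> n - 2" using bounds(1)[OF G] assms(2) unfolding kG_def by simp
  have bG2: "(if {s,t} \<in> E then 1 else 0) + 2 * kG \<le> m" using bounds(2)[OF G] assms(3) unfolding kG_def by simp
  have relG: "\<And>\<rho>. rel 2 E s t \<rho> = 1 - (if {s,t} \<in> E then \<rho> else 1) * (1 - (1 - \<rho>)^2) ^ kG"
    using rel_formula[OF G] unfolding kG_def by simp
  show ?thesis unfolding nK contains_iff[OF G] kG_def[symmetric]
  proof
    assume U: "UMRTTG 2 V E s t"
    have "K \<le> n - 2" "2 * K + 1 \<le> m" unfolding K_def using assms(5) by linarith+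
    then obtain E' where E': "two_terminal_graph V E' s t" "card E' = m" "{s,t} \<in> E'" "K \<le> card (CN E' s t)"
      using exists_H[OF G assms(2) _ _ assms(6)] by blast
    have "rel 2 E s t (1/2) \<ge> rel 2 E' s t (1/2)"
      using U E' assms(3) unfolding UMRTTG_def by auto
    then have ineq: "(if {s,t} \<in> E then 1/2 else 1) * (3/4::real) ^ kG \<le> (1/2) * (3/4) ^ card (CN E' s t)"
      unfolding relG rel_formula[OF E'(1)] using E'(3) by (simp add: power2_eq_square)
    have pK: "(3/4::real) ^ card (CN E' s t) \<le> (3/4) ^ K" using E'(4) by (simp add: power_decreasing)
    have stE: "{s,t} \<in> E"
    proof (rule ccontr)
      assume "{s,t} \<notin> E"
      then have "2 * kG \<le> m" using bG2 by simp
      then have "kG \<le> K + 1" using bG1 unfolding K_def by linarith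
      then have "(3/4::real) ^ (K+1) \<le> (3/4) ^ kG" by (rule power_decreasing) auto
      also have "\<dots> \<le> (1/2) * (3/4) ^ K"
      proof -
        have "(3/4::real) ^ kG \<le> (1/2) * (3/4) ^ card (CN E' s t)" using ineq \<open>{s,t} \<notin> E\<close> by simp
        then show ?thesis using pK by linarith
      qed
      finally show False by simp
    qed
    have "(1/2) * (3/4::real) ^ kG \<le> (1/2) * (3/4) ^ card (CN E' s t)" using ineq stE by simp
    then have "(3/4::real) ^ kG \<le> (3/4) ^ K" using pK by linarith
    then show "{s,t} \<in> E \<and> K \<le> kG" using stE by simp
  next
    assume h: "{s,t} \<in> E \<and> K \<le> kG"
    then have kGK: "kG = K" using bG1 bG2 unfolding K_def by auto
    show "UMRTTG 2 V E s t" unfolding UMRTTG_def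
    proof (intro allI impI, elim conjE)
      fix V' :: "'a set" and E' s' t' and \<rho> :: real
      assume H: "two_terminal_graph V' E' s' t'" "card V' = card V" "card E' = card E" and r: "0 \<le> \<rho>" "\<rho> \<le> 1"
      define kH where "kH = card (CN E' s' t')"
      have bH1: "kH \<le> n - 2" using bounds(1)[OF H(1)] H(2) assms(2) unfolding kH_def by simp
      have bH2: "(if {s',t'} \<in> E' then 1 else 0) + 2 * kH \<le> m" using bounds(2)[OF H(1)] H(3) assms(3) unfolding kH_def by simp
      define u where "u = 1 - (1 - \<rho>)^2"
      have e: "u = 2*\<rho> - \<rho>*\<rho>" unfolding u_def by (simp add: power2_eq_square algebra_simps)
      have q1: "\<rho>*\<rho> \<le> \<rho>" using r by (simp add: mult_left_le)
      have q2: "0 \<le> (1-\<rho>)*(1-\<rho>)" by simp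
      have q3: "(1-\<rho>)*(1-\<rho>) = 1 - 2*\<rho> + \<rho>*\<rho>" by (simp add: algebra_simps)
      have u: "0 \<le> u" "u \<le> 1" "\<rho> \<le> u" unfolding e using q1 q2 q3 r by linarith+
      have "\<rho> * u ^ K \<le> (if {s',t'} \<in> E' then \<rho> else 1) * u ^ kH"
      proof (cases "{s',t'} \<in> E'")
        case True
        then have "kH \<le> K" using bH1 bH2 unfolding K_def by auto
        then have "u ^ K \<le> u ^ kH" by (rule power_decreasing) (use u in auto)
        then show ?thesis using True r by (simp add: mult_left_mono)
      next
        case False
        then have "kH \<le> K + 1" using bH1 bH2 unfolding K_def by auto
        then have "u ^ (K+1) \<le> u ^ kH" by (rule power_decreasing) (use u in auto)
        moreover have "\<rho> * u ^ K \<le> u * u ^ K" using u by (simp add: mult_right_mono)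
        ultimately show ?thesis using False by simp
      qed
      then show "rel 2 E' s' t' \<rho> \<le> rel 2 E s t \<rho>"
        unfolding relG rel_formula[OF H(1)] using h kGK unfolding u_def kH_def by simp
    qed
  qed
qed

end
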